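(* Consider the two-layer multi-item order fulfillment problem described in the context with $K\ge 2$ FDCs and any given fixed costs $f_0,f_1,\dots,f_K\ge 0$, and let constants $b>a>0$ bound the variable costs, $a\le c_{k,t}^i\le b$. Then every online fulfillment policy $\mathrm{ALG}$ (deterministic or randomized) satisfies \[\mathfrak{R}(\mathrm{ALG})\ge \max\left\{1,\ \frac{b}{4a},\ \frac14\max_{n\ge 2}\min\left\{n,\ \frac{f_0}{\min_{k\in[K]}f_k+na}\right\}\right\},\] where the inner maximum is over integers $n\ge 2$.
   Context: Problem. There are $n$ items, $K$ front distribution centers (FDCs) indexed by $k\in[K]$, and one regional distribution center (RDC) indexed by $k=0$ with unlimited inventory of every item. FDC $k$ initially holds $I_{k,0}^i\ge 0$ units of item $i$, never replenished. In each period $t=1,\dots,T$ an order $\boldsymbol S_t=(S_t^i)_{i}$ of nonnegative integers arrives; after observing $\boldsymbol S_t$ and the variable costs $c_{k,t}^i$, a policy must immediately and irrevocably choose $m_{k,t}^i\ge 0$ with $\sum_{k=0}^K m_{k,t}^i=S_t^i$ and $m_{k,t}^i\le I_{k,t-1}^i$ ($k\in[K]$), where $I_{k,t}^i=I_{k,0}^i-\sum_{\tau\le t}m_{k,\tau}^i$. Period cost: $\sum_{k=0}^K[f_k\mathbb{I}(\sum_i m_{k,t}^i>0)+\sum_i c_{k,t}^i m_{k,t}^i]$; total cost is the sum over periods. An online policy (possibly randomized) decides in period $t$ using only fixed costs, initial inventories, and orders and variable costs up to period $t$. For an instance $I$ (choice of $n,T$, inventories, variable costs, orders), $\mathrm{ALG}(I)$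 is the (expected) total cost of the policy and $\mathrm{OPT}(I)$ the optimal total cost with full knowledge of $I$. The competitive ratio $\mathfrak R(\mathrm{ALG})$ is the supremum of $\mathrm{ALG}(I)/\mathrm{OPT}(I)$ over all $n,T$, initial inventories, variable costs in $[a,b]$ and order sequences. *)

theory Defs
  imports "HOL-Probability.Probability"
begin

text \<open>Two-layer multi-item order fulfillment. RDC is index 0, FDCs are 1..K.
  Items are indexed by i < n, periods by t in {1..T}.\<close>

datatype inst = Inst
  (n_items: nat)
  (horizon: nat)
  (inv0: "nat \<Rightarrow> nat \<Rightarrow> nat")
  (vcost: "nat \<Rightarrow> nat \<Rightarrow> nat \<Rightarrow> real")  \<comment> \<open>vcost t k i = c_{k,t}^i\<close>
  (orders: "nat \<Rightarrow> nat \<Rightarrow> nat")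

text \<open>Observation of one period: order vector and variable-cost matrix.\<close>
type_synonym obs = "(nat \<Rightarrow> nat) \<times> (nat \<Rightarrow> nat \<Rightarrow> real)"

text \<open>A deterministic online policy: given n, the initial inventories and the list of
  observations of periods 1..t, it returns the decision m_{k,t}^i (as a function of k and i).\<close>
type_synonym policy = "nat \<Rightarrow> (nat \<Rightarrow> nat \<Rightarrow> nat) \<Rightarrow> obs list \<Rightarrow> (nat \<Rightarrow> nat \<Rightarrow> nat)"

definition valid_inst :: "nat \<Rightarrow> real \<Rightarrow> real \<Rightarrow> inst \<Rightarrow> bool" where
  "valid_inst K a b I \<longleftrightarrow>
     (\<forall>t\<in>{1..horizon I}. \<forall>k\<le>K. \<forall>i<n_items I. a \<le> vcost I t k i \<and> vcost I t k i \<le> b)"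

definition feasible_plan :: "nat \<Rightarrow> inst \<Rightarrow> (nat \<Rightarrow> nat \<Rightarrow> nat \<Rightarrow> nat) \<Rightarrow> bool" where
  "feasible_plan K I m \<longleftrightarrow>
     (\<forall>t\<in>{1..horizon I}. \<forall>i<n_items I.
        (\<Sum>k\<le>K. m t k i) = orders I t i \<and>
        (\<forall>k\<in>{1..K}. m t k i + (\<Sum>\<tau>\<in>{1..<t}. m \<tau> k i) \<le> inv0 I k i))"

definition plan_cost :: "nat \<Rightarrow> (nat \<Rightarrow> real) \<Rightarrow> inst \<Rightarrow> (nat \<Rightarrow> nat \<Rightarrow> nat \<Rightarrow> nat) \<Rightarrow> real" where
  "plan_cost K f I m =
     (\<Sum>t\<in>{1..horizon I}. \<Sum>k\<le>K.
        (if (\<Sum>i<n_items I. m t k i) > 0 then f k else 0)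
        + (\<Sum>i<n_items I. vcost I t k i * real (m t k i)))"

definition opt_cost :: "nat \<Rightarrow> (nat \<Rightarrow> real) \<Rightarrow> inst \<Rightarrow> real" where
  "opt_cost K f I = Inf {plan_cost K f I m | m. feasible_plan K I m}"

text \<open>What the policy may see: data restricted to the relevant index ranges.\<close>
definition obs_at :: "nat \<Rightarrow> inst \<Rightarrow> nat \<Rightarrow> obs" where
  "obs_at K I \<tau> = ((\<lambda>i. if i < n_items I then orders I \<tau> i else 0),
                   (\<lambda>k i. if k \<le> K \<and> i < n_items I then vcost I \<tau> k i else 0))"

definition inv_obs :: "nat \<Rightarrow> inst \<Rightarrow> nat \<Rightarrow> nat \<Rightarrow> nat" where
  "inv_obs K I = (\<lambda>k i. if 1 \<le> k \<and> k \<le> K \<and> i < n_items I then inv0 I k i else 0)"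

definition history :: "nat \<Rightarrow> inst \<Rightarrow> nat \<Rightarrow> obs list" where
  "history K I t = map (obs_at K I) [1..<Suc t]"

definition policy_plan :: "nat \<Rightarrow> policy \<Rightarrow> inst \<Rightarrow> (nat \<Rightarrow> nat \<Rightarrow> nat \<Rightarrow> nat)" where
  "policy_plan K \<pi> I = (\<lambda>t. \<pi> (n_items I) (inv_obs K I) (history K I t))"

definition feasible_policy :: "nat \<Rightarrow> real \<Rightarrow> real \<Rightarrow> policy \<Rightarrow> bool" where
  "feasible_policy K a b \<pi> \<longleftrightarrow>
     (\<forall>I. valid_inst K a b I \<longrightarrow> feasible_plan K I (policy_plan K \<pi> I))"

text \<open>A randomized policy: a probability space M of random seeds and, for each seed,
  a deterministic online policy. ALG(I) is the expected total cost.\<close>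
definition alg_cost :: "nat \<Rightarrow> (nat \<Rightarrow> real) \<Rightarrow> 'r measure \<Rightarrow> ('r \<Rightarrow> policy) \<Rightarrow> inst \<Rightarrow> ennreal" where
  "alg_cost K f M \<pi> I = (\<integral>\<^sup>+ \<omega>. ennreal (plan_cost K f I (policy_plan K (\<pi> \<omega>) I)) \<partial>M)"

definition comp_ratio :: "nat \<Rightarrow> (nat \<Rightarrow> real) \<Rightarrow> real \<Rightarrow> real \<Rightarrow> 'r measure \<Rightarrow> ('r \<Rightarrow> policy) \<Rightarrow> ennreal" where
  "comp_ratio K f a b M \<pi> =
     (SUP I\<in>{I. valid_inst K a b I}. alg_cost K f M \<pi> I / ennreal (opt_cost K f I))"

end

theory Submission
  imports Defs
begin

lemma plan_cost_parts:
  assumes v: "valid_inst K a b I" and a: "0 \<le> a" and f: "\<forall>k\<le>K. f k \<ge> 0"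
  shows "plan_cost K f I m \<ge> (\<Sum>t\<in>{1..horizon I}. \<Sum>k\<le>K. \<Sum>i<n_items I. vcost I t k i * real (m t k i))"
    and "plan_cost K f I m \<ge> (\<Sum>t\<in>{1..horizon I}. (if (\<Sum>i<n_items I. m t 0 i) > 0 then f 0 else 0))"
    and "plan_cost K f I m \<ge> 0"
proof -
  have vc: "\<And>t k i. t \<in> {1..horizon I} \<Longrightarrow> k \<le> K \<Longrightarrow> i < n_items I \<Longrightarrow> vcost I t k i \<ge> 0"
    using v a unfolding valid_inst_def by (meson order_trans)
  have vs: "\<And>t k. t \<in> {1..horizon I} \<Longrightarrow> k \<le> K \<Longrightarrow> (\<Sum>i<n_items I. vcost I t k i * real (m t k i)) \<ge> 0"
    by (rule sum_nonneg) (simp add: vc)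
  have fx: "\<And>t k. k \<le> K \<Longrightarrow> (if (\<Sum>i<n_items I. m t k i) > 0 then f k else 0) \<ge> 0"
    using f by simp
  show "plan_cost K f I m \<ge> (\<Sum>t\<in>{1..horizon I}. \<Sum>k\<le>K. \<Sum>i<n_items I. vcost I t k i * real (m t k i))"
    unfolding plan_cost_def
    by (intro sum_mono) (use fx in \<open>simp add: add_increasing\<close>)
  show "plan_cost K f I m \<ge> (\<Sum>t\<in>{1..horizon I}. (if (\<Sum>i<n_items I. m t 0 i) > 0 then f 0 else 0))"
    unfolding plan_cost_def
  proof (intro sum_mono)
    fix t assume t: "t \<in> {1..horizon I}"
    let ?g = "\<lambda>k. (if (\<Sum>i<n_items I. m t k i) > 0 then f k else 0) + (\<Sum>i<n_items I. vcost I t k i * real (m t k i))"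
    have "(if (\<Sum>i<n_items I. m t 0 i) > 0 then f 0 else 0) \<le> ?g 0"
      using vs[OF t, of 0] by simp
    also have "?g 0 \<le> (\<Sum>k\<le>K. ?g k)"
      by (rule member_le_sum) (use f in \<open>auto intro!: add_nonneg_nonneg fx vs[OF t]\<close>)
    finally show "(if (\<Sum>i<n_items I. m t 0 i) > 0 then f 0 else 0) \<le> (\<Sum>k\<le>K. ?g k)" .
  qed
  show "plan_cost K f I m \<ge> 0"
    unfolding plan_cost_def
    by (intro sum_nonneg add_nonneg_nonneg fx vs) auto
qed

lemma plan_cost_sel:
  assumes "\<forall>t\<in>{1..horizon I}. sel t \<le> K"
  shows "plan_cost K f I (\<lambda>t k i. if k = sel t then g t i else 0) =
    (\<Sum>t\<in>{1..horizon I}. (if (\<Sum>i<n_items I. g t i) > 0 then f (sel t) else 0)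
        + (\<Sum>i<n_items I. vcost I t (sel t) i * real (g t i)))"
  unfolding plan_cost_def
proof (rule sum.cong[OF refl])
  fix t assume t: "t \<in> {1..horizon I}"
  let ?X = "(if (\<Sum>i<n_items I. g t i) > 0 then f (sel t) else 0)
        + (\<Sum>i<n_items I. vcost I t (sel t) i * real (g t i))"
  have "\<And>k. (if (\<Sum>i<n_items I. (if k = sel t then g t i else 0)) > 0 then f k else 0) +
         (\<Sum>i<n_items I. vcost I t k i * real (if k = sel t then g t i else 0))
        = (if k = sel t then ?X else 0)"
    by auto
  then show "(\<Sum>k\<le>K. (if (\<Sum>i<n_items I. (if k = sel t then g t i else 0)) > 0 then f k else 0) +
         (\<Sum>i<n_items I. vcost I t k i * real (if k = sel t then g t i else 0))) = ?X"
    using assms t by simp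
qed

lemma plan_cost_sel_le:
  assumes "\<forall>t\<in>{1..horizon I}. sel t \<le> K" "\<forall>k\<le>K. f k \<ge> 0"
  shows "plan_cost K f I (\<lambda>t k i. if k = sel t then g t i else 0) \<le>
    (\<Sum>t\<in>{1..horizon I}. f (sel t) + (\<Sum>i<n_items I. vcost I t (sel t) i * real (g t i)))"
  unfolding plan_cost_sel[OF assms(1)]
  by (rule sum_mono) (use assms in auto)

lemma sum_single:
  fixes g :: "nat \<Rightarrow> 'a::comm_monoid_add"
  assumes "j \<le> K" "\<forall>k\<le>K. k \<noteq> j \<longrightarrow> g k = 0"
  shows "(\<Sum>k\<le>K. g k) = g j"
proof -
  have "(\<Sum>k\<le>K. g k) = (\<Sum>k\<le>K. if k = j then g k else 0)"
    using assms by (intro sum.cong) auto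
  also have "\<dots> = g j" using assms by simp
  finally show ?thesis .
qed

lemma ennreal_div_le_imp:
  fixes x :: ennreal
  assumes "x / ennreal y \<le> ennreal r" "0 \<le> y" "0 \<le> r"
  shows "x \<le> ennreal (r * y)"
proof (cases "y = 0")
  case True
  then show ?thesis using assms by (cases "x = 0") (auto simp: top_unique)
next
  case False
  then have yp: "y > 0" using assms by auto
  have "x = x / ennreal y * ennreal y" using yp
    by (simp add: ennreal_divide_times)
  also have "\<dots> \<le> ennreal r * ennreal y" using assms(1) by (rule mult_right_mono) simp
  also have "\<dots> = ennreal (r*y)" using assms by (simp add: ennreal_mult)
  finally show ?thesis .
qed

lemma opt_le:
  assumes v: "valid_inst K a b I" and a: "0 \<le> a" and f: "\<forall>k\<le>K. f k \<ge> 0"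
    and fe: "feasible_plan K I m0"
  shows "opt_cost K f I \<le> plan_cost K f I m0" and "opt_cost K f I \<ge> 0"
proof -
  have bdd: "bdd_below {plan_cost K f I m | m. feasible_plan K I m}"
    by (rule bdd_belowI[of _ 0]) (use plan_cost_parts(3)[OF v a f] in auto)
  show "opt_cost K f I \<le> plan_cost K f I m0"
    unfolding opt_cost_def by (rule cInf_lower) (use fe bdd in auto)
  show "opt_cost K f I \<ge> 0"
    unfolding opt_cost_def by (rule cInf_greatest) (use fe plan_cost_parts(3)[OF v a f] in auto)
qed

lemma alg_le_opt:
  assumes "comp_ratio K f a b M \<pi> = ennreal r" "r \<ge> 0" "valid_inst K a b I"
    and a: "0 \<le> a" and f: "\<forall>k\<le>K. f k \<ge> 0"
    and fe: "feasible_plan K I m0"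
  shows "alg_cost K f M \<pi> I \<le> ennreal (r * plan_cost K f I m0)"
proof -
  have "alg_cost K f M \<pi> I / ennreal (opt_cost K f I) \<le> comp_ratio K f a b M \<pi>"
    unfolding comp_ratio_def by (rule SUP_upper) (use assms in simp)
  then have "alg_cost K f M \<pi> I \<le> ennreal (r * opt_cost K f I)"
    using assms opt_le[OF assms(3) a f fe] by (intro ennreal_div_le_imp) auto
  also have "\<dots> \<le> ennreal (r * plan_cost K f I m0)"
    using opt_le[OF assms(3) a f fe] assms(2) by (intro ennreal_leI mult_left_mono) auto
  finally show ?thesis .
qed

lemma two_scen:
  fixes M :: "'r measure"
  assumes "prob_space M" "cA \<in> borel_measurable M" "cB \<in> borel_measurable M"
    and pw: "\<forall>\<omega>\<in>space M. 0 \<le> cA \<omega> \<and> 0 \<le> cB \<omega> \<and> L \<le> lam * cA \<omega> + cB \<omega>"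
    and lam: "lam \<ge> 0"
    and iA: "(\<integral>\<^sup>+\<omega>. ennreal (cA \<omega>) \<partial>M) \<le> ennreal (r * UA)"
    and iB: "(\<integral>\<^sup>+\<omega>. ennreal (cB \<omega>) \<partial>M) \<le> ennreal (r * UB)"
    and r: "r \<ge> 0" and U: "UA \<ge> 0" "UB \<ge> 0"
  shows "L \<le> r * (lam * UA + UB)"
proof -
  interpret prob_space M by fact
  have "ennreal L = (\<integral>\<^sup>+\<omega>. ennreal L \<partial>M)"
    by (simp add: emeasure_space_1)
  also have "\<dots> \<le> (\<integral>\<^sup>+\<omega>. ennreal lam * ennreal (cA \<omega>) + ennreal (cB \<omega>) \<partial>M)"
  proof (rule nn_integral_mono)
    fix \<omega> assume w: "\<omega> \<in> space M"
    have "ennreal L \<le> ennreal (lam * cA \<omega> + cB \<omega>)" using pw w by (intro ennreal_leI) auto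
    also have "\<dots> = ennreal lam * ennreal (cA \<omega>) + ennreal (cB \<omega>)"
      using pw w lam by (simp add: ennreal_plus[symmetric] ennreal_mult)
    finally show "ennreal L \<le> ennreal lam * ennreal (cA \<omega>) + ennreal (cB \<omega>)" .
  qed
  also have "\<dots> = ennreal lam * (\<integral>\<^sup>+\<omega>. ennreal (cA \<omega>) \<partial>M) + (\<integral>\<^sup>+\<omega>. ennreal (cB \<omega>) \<partial>M)"
  proof -
    have mA: "(\<lambda>\<omega>. ennreal (cA \<omega>)) \<in> borel_measurable M" using assms(2) by measurable
    have mB: "(\<lambda>\<omega>. ennreal (cB \<omega>)) \<in> borel_measurable M" using assms(3) by measurable
    have mA': "(\<lambda>\<omega>. ennreal lam * ennreal (cA \<omega>)) \<in> borel_measurable M" using mA by measurable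
    show ?thesis
      by (simp only: nn_integral_add[OF mA' mB] nn_integral_cmult[OF mA])
  qed
  also have "\<dots> \<le> ennreal lam * ennreal (r * UA) + ennreal (r * UB)"
    by (rule add_mono[OF mult_left_mono[OF iA] iB]) simp
  also have "\<dots> = ennreal (r * (lam * UA + UB))"
  proof -
    have e1: "ennreal lam * ennreal (r * UA) = ennreal (lam * (r * UA))"
      using lam r U by (simp add: ennreal_mult)
    have e2: "ennreal (lam * (r * UA)) + ennreal (r * UB) = ennreal (lam * (r * UA) + r * UB)"
      using lam r U by (simp add: ennreal_plus)
    have e3: "lam * (r * UA) + r * UB = r * (lam * UA + UB)" by (simp add: algebra_simps)
    show ?thesis using e1 e2 e3 by simp
  qed
  finally have fin: "ennreal L \<le> ennreal (r * (lam * UA + UB))" .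
  have nn: "0 \<le> r * (lam * UA + UB)" using lam r U by simp
  show ?thesis using fin ennreal_le_iff[OF nn] by blast
qed

lemma wsum1:
  fixes m :: "nat \<Rightarrow> nat" and a b :: real
  assumes "j \<le> K"
  shows "(\<Sum>k\<le>K. (if k = j then a else b) * real (m k)) = b * real (\<Sum>k\<le>K. m k) - (b - a) * real (m j)"
proof -
  have "\<And>k. (if k = j then a else b) * real (m k) = b * real (m k) - (b - a) * (if k = j then real (m k) else 0)"
    by (simp add: algebra_simps)
  then have "(\<Sum>k\<le>K. (if k = j then a else b) * real (m k)) = (\<Sum>k\<le>K. b * real (m k) - (b - a) * (if k = j then real (m k) else 0))"
    by simp
  also have "\<dots> = b * real (\<Sum>k\<le>K. m k) - (b - a) * real (m j)"
    using assms by (simp add: sum_subtractf sum_distrib_left[symmetric])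
  finally show ?thesis .
qed

lemma wsum2:
  fixes m :: "nat \<Rightarrow> nat" and a b :: real
  assumes "j1 \<le> K" "j2 \<le> K" "j1 \<noteq> j2"
  shows "(\<Sum>k\<le>K. (if k = j1 \<or> k = j2 then a else b) * real (m k)) = b * real (\<Sum>k\<le>K. m k) - (b - a) * (real (m j1) + real (m j2))"
proof -
  have "\<And>k. (if k = j1 \<or> k = j2 then a else b) * real (m k) = b * real (m k) - (b - a) * (if k = j1 then real (m k) else 0) - (b - a) * (if k = j2 then real (m k) else 0)"
    using assms by (simp add: algebra_simps)
  then have "(\<Sum>k\<le>K. (if k = j1 \<or> k = j2 then a else b) * real (m k)) = (\<Sum>k\<le>K. b * real (m k) - (b - a) * (if k = j1 then real (m k) else 0) - (b - a) * (if k = j2 then real (m k) else 0))"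
    by simp
  also have "\<dots> = b * real (\<Sum>k\<le>K. m k) - (b - a) * (real (m j1) + real (m j2))"
    using assms by (simp only: sum_subtractf sum_distrib_left[symmetric] of_nat_sum sum.delta finite_atMost atMost_iff if_True) (simp add: algebra_simps)
  finally show ?thesis .
qed

lemma two_le_sum:
  fixes m :: "nat \<Rightarrow> nat"
  assumes "j1 \<le> K" "j2 \<le> K" "j1 \<noteq> j2"
  shows "m j1 + m j2 \<le> (\<Sum>k\<le>K. m k)"
proof -
  have "(\<Sum>k\<le>K. (if k = j1 then m k else 0) + (if k = j2 then m k else 0)) \<le> (\<Sum>k\<le>K. m k)"
    by (rule sum_mono) (use assms in auto)
  then show ?thesis using assms by (simp add: sum.distrib)
qed

definition inv2 :: "nat \<Rightarrow> nat \<Rightarrow> nat \<Rightarrow> nat" where "inv2 N = (\<lambda>k i. if k = 1 \<or> k = 2 then N else 0 :: nat)"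
definition vA2 :: "real \<Rightarrow> real \<Rightarrow> nat \<Rightarrow> nat \<Rightarrow> nat \<Rightarrow> real" where "vA2 a b = (\<lambda>t k i. if t = 1 then (if k = 1 \<or> k = 2 then a else b) else (if k = 1 then a else (b::real)))"
definition vB2 :: "real \<Rightarrow> real \<Rightarrow> nat \<Rightarrow> nat \<Rightarrow> nat \<Rightarrow> real" where "vB2 a b = (\<lambda>t k i. if t = 1 then (if k = 1 \<or> k = 2 then a else b) else (if k = 2 then a else (b::real)))"
definition "IA2 N a b = Inst 1 2 (inv2 N) (vA2 a b) (\<lambda>t i. N)"
definition "IB2 N a b = Inst 1 2 (inv2 N) (vB2 a b) (\<lambda>t i. N)"

lemma two12: "{1..2::nat} = {1,2}" "{Suc 0..2} = {1,2}" by auto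

lemma pw2:
  assumes K: "K \<ge> 2" and f: "\<forall>k\<le>K. f k \<ge> 0" and a: "0 < a" "a < b"
    and fA: "feasible_plan K (IA2 N a b) mA" and fB: "feasible_plan K (IB2 N a b) mB"
    and same: "mA 1 = mB 1"
  shows "(3*a+b) * real N \<le> plan_cost K f (IA2 N a b) mA + plan_cost K f (IB2 N a b) mB"
proof -
  have vA: "valid_inst K a b (IA2 N a b)" and vB: "valid_inst K a b (IB2 N a b)"
    using a by (auto simp: valid_inst_def IA2_def IB2_def vA2_def vB2_def)
  have FA: "\<forall>t\<in>{1..2}. \<forall>i<1. (\<Sum>k\<le>K. mA t k i) = N \<and> (\<forall>k\<in>{1..K}. mA t k i + (\<Sum>\<tau>\<in>{1..<t}. mA \<tau> k i) \<le> inv2 N k i)"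
    using fA by (simp add: feasible_plan_def IA2_def)
  have FB: "\<forall>t\<in>{1..2}. \<forall>i<1. (\<Sum>k\<le>K. mB t k i) = N \<and> (\<forall>k\<in>{1..K}. mB t k i + (\<Sum>\<tau>\<in>{1..<t}. mB \<tau> k i) \<le> inv2 N k i)"
    using fB by (simp add: feasible_plan_def IB2_def)
  have o12: "{1..<2::nat} = {1}" "{Suc 0..<2} = {1}" by auto
  have A1: "(\<Sum>k\<le>K. mA 1 k 0) = N" using FA by auto
  have A2: "(\<Sum>k\<le>K. mA 2 k 0) = N" using FA by auto
  have B2: "(\<Sum>k\<le>K. mB 2 k 0) = N" using FB by auto
  have k1: "(1::nat) \<in> {1..K}" and k2: "(2::nat) \<in> {1..K}" and t2: "(2::nat) \<in> {1..2}" using K by auto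
  have "mA 2 1 0 + (\<Sum>\<tau>\<in>{1..<2}. mA \<tau> 1 0) \<le> inv2 N 1 0"
    using bspec[OF conjunct2[OF mp[OF spec[OF bspec[OF FA t2], of 0] zero_less_one]] k1] by simp
  then have A2i: "mA 2 1 0 + mA 1 1 0 \<le> N" by (simp add: o12 inv2_def)
  have "mB 2 2 0 + (\<Sum>\<tau>\<in>{1..<2}. mB \<tau> 2 0) \<le> inv2 N 2 0"
    using bspec[OF conjunct2[OF mp[OF spec[OF bspec[OF FB t2], of 0] zero_less_one]] k2] by simp
  then have B2i: "mB 2 2 0 + mB 1 2 0 \<le> N" by (simp add: o12 inv2_def)
  have A1r: "(\<Sum>k\<le>K. real (mA 1 k 0)) = real N" by (simp only: of_nat_sum[symmetric] A1)
  have A2r: "(\<Sum>k\<le>K. real (mA 2 k 0)) = real N" by (simp only: of_nat_sum[symmetric] A2)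
  have B2r: "(\<Sum>k\<le>K. real (mB 2 k 0)) = real N" by (simp only: of_nat_sum[symmetric] B2)
  have xy: "mA 1 1 0 + mA 1 2 0 \<le> N" using two_le_sum[of 1 K 2 "\<lambda>k. mA 1 k 0"] K A1 by simp
  define x where "x = real (mA 1 1 0)"
  define y where "y = real (mA 1 2 0)"
  define uA where "uA = real (mA 2 1 0)"
  define uB where "uB = real (mB 2 2 0)"
  have P1: "(\<Sum>k\<le>K. vA2 a b 1 k 0 * real (mA 1 k 0)) = b * real N - (b - a) * (x + y)"
    using wsum2[of 1 K 2 a b "\<lambda>k. mA 1 k 0"] K A1r by (simp add: vA2_def x_def y_def)
  have PA2: "(\<Sum>k\<le>K. vA2 a b 2 k 0 * real (mA 2 k 0)) = b * real N - (b - a) * uA"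
    using wsum1[of 1 K a b "\<lambda>k. mA 2 k 0"] K A2r by (simp add: vA2_def uA_def)
  have PB1: "(\<Sum>k\<le>K. vB2 a b 1 k 0 * real (mB 1 k 0)) = b * real N - (b - a) * (x + y)"
    using wsum2[of 1 K 2 a b "\<lambda>k. mA 1 k 0"] K A1r same[symmetric] by (simp add: vB2_def x_def y_def)
  have PB2: "(\<Sum>k\<le>K. vB2 a b 2 k 0 * real (mB 2 k 0)) = b * real N - (b - a) * uB"
    using wsum1[of 2 K a b "\<lambda>k. mB 2 k 0"] K B2r by (simp add: vB2_def uB_def)
  have cA: "plan_cost K f (IA2 N a b) mA \<ge> b * real N - (b - a) * (x + y) + (b * real N - (b - a) * uA)"
    using plan_cost_parts(1)[OF vA _ f, of mA] a P1 PA2 by (simp add: IA2_def two12)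
  have cB: "plan_cost K f (IB2 N a b) mB \<ge> b * real N - (b - a) * (x + y) + (b * real N - (b - a) * uB)"
    using plan_cost_parts(1)[OF vB _ f, of mB] a PB1 PB2 by (simp add: IB2_def two12)
  have h1: "uA \<le> real N - x" using A2i unfolding uA_def x_def by linarith
  have h2: "uB \<le> real N - y" using B2i same unfolding uB_def y_def by (metis add.commute le_diff_eq of_nat_add of_nat_le_iff)
  have h3: "x + y \<le> real N" using xy unfolding x_def y_def by linarith
  have d: "b - a > 0" using a by simp
  have "(b - a) * uA \<le> (b - a) * (real N - x)" using h1 d by (intro mult_left_mono) auto
  moreover have "(b - a) * uB \<le> (b - a) * (real N - y)" using h2 d by (intro mult_left_mono) auto
  moreover have "(b - a) * (x + y) \<le> (b - a) * real N" using h3 d by (intro mult_left_mono) auto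
  ultimately show ?thesis using cA cB by (simp add: algebra_simps)
qed

lemma constr2:
  fixes M :: "'r measure" and \<pi> :: "'r \<Rightarrow> policy"
  assumes K: "K \<ge> 2" and f: "\<forall>k\<le>K. f k \<ge> 0" and a: "0 < a" "a < b"
    and P: "prob_space M"
    and fp: "\<forall>\<omega>\<in>space M. feasible_policy K a b (\<pi> \<omega>)"
    and meas: "\<forall>I. valid_inst K a b I \<longrightarrow>
           (\<lambda>\<omega>. plan_cost K f I (policy_plan K (\<pi> \<omega>) I)) \<in> borel_measurable M"
    and cr: "comp_ratio K f a b M \<pi> = ennreal r" and r: "r \<ge> 0"
  shows "(3*a+b) * real N \<le> r * (1 * (f 1 + f 2 + 2*a*real N) + (f 1 + f 2 + 2*a*real N))"
proof -
  let ?IA = "IA2 N a b" and ?IB = "IB2 N a b"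
  have vA: "valid_inst K a b ?IA" and vB: "valid_inst K a b ?IB"
    using a by (auto simp: valid_inst_def IA2_def IB2_def vA2_def vB2_def)
  define selA :: "nat \<Rightarrow> nat" where "selA = (\<lambda>t. if t = 1 then 2 else 1)"
  define selB :: "nat \<Rightarrow> nat" where "selB = (\<lambda>t. if t = 1 then 1 else 2)"
  have o12: "{1..<2::nat} = {1}" "{Suc 0..<2} = {1}" by auto
  have feA: "feasible_plan K ?IA (\<lambda>t k i. if k = selA t then N else 0)"
    using K unfolding feasible_plan_def by (simp add: IA2_def two12 o12 selA_def inv2_def)
  have feB: "feasible_plan K ?IB (\<lambda>t k i. if k = selB t then N else 0)"
    using K unfolding feasible_plan_def by (simp add: IB2_def two12 o12 selB_def inv2_def)
  have cA: "plan_cost K f ?IA (\<lambda>t k i. if k = selA t then N else 0) \<le> f 1 + f 2 + 2*a*real N"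
  proof -
    have "plan_cost K f ?IA (\<lambda>t k i. if k = selA t then N else 0) \<le>
      (\<Sum>t\<in>{1..horizon ?IA}. f (selA t) + (\<Sum>i<n_items ?IA. vcost ?IA t (selA t) i * real N))"
      by (rule plan_cost_sel_le) (use K f in \<open>auto simp: IA2_def selA_def\<close>)
    also have "\<dots> = f 1 + f 2 + 2*a*real N"
      by (simp add: IA2_def two12 selA_def vA2_def algebra_simps)
    finally show ?thesis .
  qed
  have cB: "plan_cost K f ?IB (\<lambda>t k i. if k = selB t then N else 0) \<le> f 1 + f 2 + 2*a*real N"
  proof -
    have "plan_cost K f ?IB (\<lambda>t k i. if k = selB t then N else 0) \<le>
      (\<Sum>t\<in>{1..horizon ?IB}. f (selB t) + (\<Sum>i<n_items ?IB. vcost ?IB t (selB t) i * real N))"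
      by (rule plan_cost_sel_le) (use K f in \<open>auto simp: IB2_def selB_def\<close>)
    also have "\<dots> = f 1 + f 2 + 2*a*real N"
      by (simp add: IB2_def two12 selB_def vB2_def algebra_simps)
    finally show ?thesis .
  qed
  have same: "\<And>p. policy_plan K p ?IA 1 = policy_plan K p ?IB 1"
  proof -
    have "obs_at K ?IA 1 = obs_at K ?IB 1"
      unfolding obs_at_def IA2_def IB2_def by (simp add: fun_eq_iff vA2_def vB2_def)
    moreover have "inv_obs K ?IA = inv_obs K ?IB"
      unfolding inv_obs_def IA2_def IB2_def by (simp add: fun_eq_iff)
    moreover have "n_items ?IA = n_items ?IB" by (simp add: IA2_def IB2_def)
    ultimately show "\<And>p. policy_plan K p ?IA 1 = policy_plan K p ?IB 1"
      by (simp add: policy_plan_def history_def)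
  qed
  show ?thesis
  proof (rule two_scen[OF P])
    show "(\<lambda>\<omega>. plan_cost K f ?IA (policy_plan K (\<pi> \<omega>) ?IA)) \<in> borel_measurable M"
      using meas vA by blast
    show "(\<lambda>\<omega>. plan_cost K f ?IB (policy_plan K (\<pi> \<omega>) ?IB)) \<in> borel_measurable M"
      using meas vB by blast
    show "\<forall>\<omega>\<in>space M. 0 \<le> plan_cost K f ?IA (policy_plan K (\<pi> \<omega>) ?IA) \<and>
        0 \<le> plan_cost K f ?IB (policy_plan K (\<pi> \<omega>) ?IB) \<and>
        (3*a+b) * real N \<le> 1 * plan_cost K f ?IA (policy_plan K (\<pi> \<omega>) ?IA) + plan_cost K f ?IB (policy_plan K (\<pi> \<omega>) ?IB)"
    proof
      fix \<omega> assume w: "\<omega> \<in> space M"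
      have fA: "feasible_plan K ?IA (policy_plan K (\<pi> \<omega>) ?IA)"
        using fp w vA unfolding feasible_policy_def by blast
      have fB: "feasible_plan K ?IB (policy_plan K (\<pi> \<omega>) ?IB)"
        using fp w vB unfolding feasible_policy_def by blast
      show "0 \<le> plan_cost K f ?IA (policy_plan K (\<pi> \<omega>) ?IA) \<and>
        0 \<le> plan_cost K f ?IB (policy_plan K (\<pi> \<omega>) ?IB) \<and>
        (3*a+b) * real N \<le> 1 * plan_cost K f ?IA (policy_plan K (\<pi> \<omega>) ?IA) + plan_cost K f ?IB (policy_plan K (\<pi> \<omega>) ?IB)"
        using plan_cost_parts(3)[OF vA _ f] plan_cost_parts(3)[OF vB _ f] a
          pw2[OF K f a fA fB same] by simp
    qed
    show "(\<integral>\<^sup>+\<omega>. ennreal (plan_cost K f ?IA (policy_plan K (\<pi> \<omega>) ?IA)) \<partial>M) \<le> ennreal (r * (f 1 + f 2 + 2*a*real N))"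
    proof -
      have "alg_cost K f M \<pi> ?IA \<le> ennreal (r * plan_cost K f ?IA (\<lambda>t k i. if k = selA t then N else 0))"
        by (rule alg_le_opt[OF cr r vA _ f feA]) (use a in simp)
      also have "\<dots> \<le> ennreal (r * (f 1 + f 2 + 2*a*real N))"
        using cA r by (intro ennreal_leI mult_left_mono) auto
      finally show ?thesis unfolding alg_cost_def .
    qed
    show "(\<integral>\<^sup>+\<omega>. ennreal (plan_cost K f ?IB (policy_plan K (\<pi> \<omega>) ?IB)) \<partial>M) \<le> ennreal (r * (f 1 + f 2 + 2*a*real N))"
    proof -
      have "alg_cost K f M \<pi> ?IB \<le> ennreal (r * plan_cost K f ?IB (\<lambda>t k i. if k = selB t then N else 0))"
        by (rule alg_le_opt[OF cr r vB _ f feB]) (use a in simp)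
      also have "\<dots> \<le> ennreal (r * (f 1 + f 2 + 2*a*real N))"
        using cB r by (intro ennreal_leI mult_left_mono) auto
      finally show ?thesis unfolding alg_cost_def .
    qed
    show "0 \<le> (1::real)" by simp
    show "0 \<le> r" by fact
    show "0 \<le> f 1 + f 2 + 2*a*real N" using f K a by auto
    show "0 \<le> f 1 + f 2 + 2*a*real N" using f K a by auto
  qed
qed

definition inv3 :: "nat \<Rightarrow> nat \<Rightarrow> nat \<Rightarrow> nat" where "inv3 ks = (\<lambda>k i. if k = ks then 1 else 0)"
definition ord3 :: "nat \<Rightarrow> nat \<Rightarrow> nat" where "ord3 = (\<lambda>t i. if t = 1 then 1 else if t = i + 2 then 1 else 0)"
definition IA3 :: "nat \<Rightarrow> nat \<Rightarrow> real \<Rightarrow> inst" where "IA3 n ks a = Inst n 1 (inv3 ks) (\<lambda>t k i. a) ord3"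
definition IB3 :: "nat \<Rightarrow> nat \<Rightarrow> real \<Rightarrow> inst" where "IB3 n ks a = Inst n (n+1) (inv3 ks) (\<lambda>t k i. a) ord3"

lemma key3:
  assumes ks: "ks \<in> {1..K}" and fB: "feasible_plan K (IB3 n ks a) m"
    and i: "i < n" and m10: "m 1 0 i = 0"
  shows "m (i+2) 0 i = 1"
proof -
  have FB: "\<forall>t\<in>{1..n+1}. \<forall>i<n. (\<Sum>k\<le>K. m t k i) = ord3 t i \<and> (\<forall>k\<in>{1..K}. m t k i + (\<Sum>\<tau>\<in>{1..<t}. m \<tau> k i) \<le> inv3 ks k i)"
    using fB by (simp add: feasible_plan_def IB3_def)
  have t1: "(1::nat) \<in> {1..n+1}" by simp
  have FB1: "(\<Sum>k\<le>K. m 1 k i) = ord3 1 i \<and> (\<forall>k\<in>{1..K}. m 1 k i + (\<Sum>\<tau>\<in>{1..<1}. m \<tau> k i) \<le> inv3 ks k i)"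
    using bspec[OF FB t1] i by blast
  have F1: "(\<Sum>k\<le>K. m 1 k i) = 1" using FB1 by (simp add: ord3_def)
  have I1: "\<forall>k\<in>{1..K}. m 1 k i \<le> inv3 ks k i" using FB1 by simp
  have "(\<Sum>k\<le>K. m 1 k i) = m 1 ks i"
  proof (rule sum_single)
    show "ks \<le> K" using ks by simp
    show "\<forall>k\<le>K. k \<noteq> ks \<longrightarrow> m 1 k i = 0"
    proof (intro allI impI)
      fix k assume k: "k \<le> K" "k \<noteq> ks"
      show "m 1 k i = 0"
      proof (cases "k = 0")
        case True then show ?thesis using m10 by simp
      next
        case False
        then have kK: "k \<in> {1..K}" using k by auto
        have "m 1 k i \<le> inv3 ks k i" using bspec[OF I1 kK] .
        then show ?thesis using k by (simp add: inv3_def)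
      qed
    qed
  qed
  then have mks1: "m 1 ks i = 1" using F1 by simp
  define t where "t = i + 2"
  have tt: "t \<in> {1..n+1}" using i by (simp add: t_def)
  have FBt: "(\<Sum>k\<le>K. m t k i) = ord3 t i \<and> (\<forall>k\<in>{1..K}. m t k i + (\<Sum>\<tau>\<in>{1..<t}. m \<tau> k i) \<le> inv3 ks k i)"
    using bspec[OF FB tt] i by blast
  have Ft: "(\<Sum>k\<le>K. m t k i) = 1" using FBt by (simp add: ord3_def t_def)
  have It: "\<forall>k\<in>{1..K}. m t k i + (\<Sum>\<tau>\<in>{1..<t}. m \<tau> k i) \<le> inv3 ks k i" using FBt by blast
  have "m 1 ks i \<le> (\<Sum>\<tau>\<in>{1..<t}. m \<tau> ks i)"
    by (rule member_le_sum) (auto simp: t_def)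
  moreover have "m t ks i + (\<Sum>\<tau>\<in>{1..<t}. m \<tau> ks i) \<le> inv3 ks ks i" using bspec[OF It ks] .
  ultimately have mtks: "m t ks i = 0" using mks1 by (simp add: inv3_def)
  have "(\<Sum>k\<le>K. m t k i) = m t 0 i"
  proof (rule sum_single)
    show "0 \<le> K" by simp
    show "\<forall>k\<le>K. k \<noteq> 0 \<longrightarrow> m t k i = 0"
    proof (intro allI impI)
      fix k assume k: "k \<le> K" "k \<noteq> 0"
      then have kK: "k \<in> {1..K}" by auto
      show "m t k i = 0"
      proof (cases "k = ks")
        case True then show ?thesis using mtks by simp
      next
        case False
        have "m t k i + (\<Sum>\<tau>\<in>{1..<t}. m \<tau> k i) \<le> inv3 ks k i" using bspec[OF It kK] .
        then show ?thesis using False by (simp add: inv3_def)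
      qed
    qed
  qed
  then show ?thesis using Ft by (simp add: t_def)
qed

lemma pw3:
  assumes ks: "ks \<in> {1..K}" and f: "\<forall>k\<le>K. f k \<ge> 0" and a: "0 < a" "a \<le> b"
    and fA: "feasible_plan K (IA3 n ks a) m" and fB: "feasible_plan K (IB3 n ks a) m"
  shows "real n * f 0 \<le> real n * plan_cost K f (IA3 n ks a) m + plan_cost K f (IB3 n ks a) m"
proof -
  have vA: "valid_inst K a b (IA3 n ks a)" and vB: "valid_inst K a b (IB3 n ks a)"
    using a by (auto simp: valid_inst_def IA3_def IB3_def)
  have cA0: "plan_cost K f (IA3 n ks a) m \<ge> 0" and cB0: "plan_cost K f (IB3 n ks a) m \<ge> 0"
    using plan_cost_parts(3)[OF vA _ f] plan_cost_parts(3)[OF vB _ f] a by auto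
  have f0: "f 0 \<ge> 0" using f by simp
  show ?thesis
  proof (cases "\<exists>i<n. m 1 0 i > 0")
    case True
    then obtain i where i: "i < n" "m 1 0 i > 0" by blast
    have "m 1 0 i \<le> (\<Sum>i<n. m 1 0 i)" by (rule member_le_sum) (use i in auto)
    then have pos: "(\<Sum>i<n. m 1 0 i) > 0" using i by linarith
    have "plan_cost K f (IA3 n ks a) m \<ge> (\<Sum>t\<in>{1..1}. (if (\<Sum>i<n. m t 0 i) > 0 then f 0 else 0))"
      using plan_cost_parts(2)[OF vA _ f, of m] a by (simp add: IA3_def)
    then have "plan_cost K f (IA3 n ks a) m \<ge> f 0" using pos by simp
    then have "real n * f 0 \<le> real n * plan_cost K f (IA3 n ks a) m" by (intro mult_left_mono) auto
    then show ?thesis using cB0 by linarith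
  next
    case False
    then have m10: "\<forall>i<n. m 1 0 i = 0" by auto
    have posT: "(\<Sum>i<n. m t 0 i) > 0" if t: "t \<in> {2..n+1}" for t
    proof -
      define i where "i = t - 2"
      have i: "i < n" "t = i + 2" using t by (auto simp: i_def)
      have "m t 0 i = 1" using key3[OF ks fB i(1)] m10 i by simp
      moreover have "m t 0 i \<le> (\<Sum>i<n. m t 0 i)" by (rule member_le_sum) (use i in auto)
      ultimately show ?thesis by linarith
    qed
    have "plan_cost K f (IB3 n ks a) m \<ge> (\<Sum>t\<in>{1..n+1}. (if (\<Sum>i<n. m t 0 i) > 0 then f 0 else 0))"
      using plan_cost_parts(2)[OF vB _ f, of m] a by (simp add: IB3_def)
    moreover have "(\<Sum>t\<in>{2..n+1}. (if (\<Sum>i<n. m t 0 i) > 0 then f 0 else 0)) \<le> (\<Sum>t\<in>{1..n+1}. (if (\<Sum>i<n. m t 0 i) > 0 then f 0 else 0))"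
      by (rule sum_mono2) (use f0 in auto)
    moreover have "(\<Sum>t\<in>{2..n+1}. (if (\<Sum>i<n. m t 0 i) > 0 then f 0 else 0)) = (\<Sum>t\<in>{2..n+1}. f 0)"
      by (rule sum.cong) (use posT in auto)
    moreover have "(\<Sum>t\<in>{2..n+1}. f 0) = real n * f 0" by simp
    moreover have "0 \<le> real n * plan_cost K f (IA3 n ks a) m" using cA0 by simp
    ultimately show ?thesis by linarith
  qed
qed

lemma constr3:
  fixes M :: "'r measure" and \<pi> :: "'r \<Rightarrow> policy"
  assumes ks: "ks \<in> {1..K}" and f: "\<forall>k\<le>K. f k \<ge> 0" and a: "0 < a" "a < b"
    and P: "prob_space M"
    and fp: "\<forall>\<omega>\<in>space M. feasible_policy K a b (\<pi> \<omega>)"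
    and meas: "\<forall>I. valid_inst K a b I \<longrightarrow>
           (\<lambda>\<omega>. plan_cost K f I (policy_plan K (\<pi> \<omega>) I)) \<in> borel_measurable M"
    and cr: "comp_ratio K f a b M \<pi> = ennreal r" and r: "r \<ge> 0" and n: "n \<ge> 1"
  shows "real n * f 0 \<le> r * (real n * (f ks + real n * a) + (f 0 + real n * a + real n * (f ks + a)))"
proof -
  let ?IA = "IA3 n ks a" and ?IB = "IB3 n ks a"
  have vA: "valid_inst K a b ?IA" and vB: "valid_inst K a b ?IB"
    using a by (auto simp: valid_inst_def IA3_def IB3_def)
  have ksK: "ks \<le> K" "ks \<noteq> 0" using ks by auto
  define selB :: "nat \<Rightarrow> nat" where "selB = (\<lambda>t. if t = 1 then 0 else ks)"
  have feA: "feasible_plan K ?IA (\<lambda>t k i. if k = ks then 1 else 0)"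
    using ksK unfolding feasible_plan_def by (simp add: IA3_def ord3_def inv3_def)
  have ordks: "(if ks = selB \<tau> then ord3 \<tau> i else 0) = (if \<tau> = i + 2 then 1 else 0)" for \<tau> i
    using ksK by (auto simp: selB_def ord3_def)
  have feB: "feasible_plan K ?IB (\<lambda>t k i. if k = selB t then ord3 t i else 0)"
    unfolding feasible_plan_def
  proof (intro ballI allI impI conjI)
    fix t i assume t: "t \<in> {1..horizon ?IB}" and i: "i < n_items ?IB"
    show "(\<Sum>k\<le>K. if k = selB t then ord3 t i else 0) = orders ?IB t i"
      using ksK by (simp add: selB_def IB3_def)
    fix k assume k: "k \<in> {1..K}"
    show "(if k = selB t then ord3 t i else 0) + (\<Sum>\<tau>\<in>{1..<t}. if k = selB \<tau> then ord3 \<tau> i else 0) \<le> inv0 ?IB k i"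
    proof (cases "k = ks")
      case True
      have "(\<Sum>\<tau>\<in>{1..<t}. if k = selB \<tau> then ord3 \<tau> i else 0) = (\<Sum>\<tau>\<in>{1..<t}. if \<tau> = i + 2 then 1 else 0)"
        using True ordks by simp
      also have "\<dots> = (if i + 2 \<in> {1..<t} then 1 else 0)" by (simp add: sum.delta)
      finally show ?thesis using True ordks[of t i] by (simp add: IB3_def inv3_def)
    next
      case False
      then have "\<And>\<tau>. k \<noteq> selB \<tau>" using k by (auto simp: selB_def)
      then show ?thesis by simp
    qed
  qed
  have cA: "plan_cost K f ?IA (\<lambda>t k i. if k = ks then 1 else 0) \<le> f ks + real n * a"
  proof -
    have "plan_cost K f ?IA (\<lambda>t k i. if k = (\<lambda>t. ks) t then (\<lambda>t i. 1) t i else 0) \<le>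
      (\<Sum>t\<in>{1..horizon ?IA}. f ks + (\<Sum>i<n_items ?IA. vcost ?IA t ks i * real 1))"
      by (rule plan_cost_sel_le) (use ksK f in auto)
    then show ?thesis by (simp add: IA3_def)
  qed
  have cB: "plan_cost K f ?IB (\<lambda>t k i. if k = selB t then ord3 t i else 0) \<le> f 0 + real n * a + real n * (f ks + a)"
  proof -
    define h where "h = (\<lambda>t. f (selB t) + (\<Sum>i<n. a * real (ord3 t i)))"
    have "plan_cost K f ?IB (\<lambda>t k i. if k = selB t then ord3 t i else 0) \<le>
      (\<Sum>t\<in>{1..horizon ?IB}. f (selB t) + (\<Sum>i<n_items ?IB. vcost ?IB t (selB t) i * real (ord3 t i)))"
      by (rule plan_cost_sel_le) (use ksK f in \<open>auto simp: selB_def\<close>)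
    also have "\<dots> = (\<Sum>t\<in>{1..n+1}. h t)" by (simp add: IB3_def h_def)
    also have "\<dots> = h 1 + (\<Sum>t\<in>{2..n+1}. h t)"
      by (subst sum.atLeast_Suc_atMost) (auto simp: numeral_2_eq_2)
    also have "h 1 = f 0 + real n * a" by (simp add: h_def selB_def ord3_def)
    also have "(\<Sum>t\<in>{2..n+1}. h t) \<le> real (card {2..n+1}) * (f ks + a)"
    proof (rule sum_bounded_above)
      fix t assume t: "t \<in> {2..n+1}"
      have "(\<Sum>i<n. a * real (ord3 t i)) = (\<Sum>i<n. if i = t - 2 then a else 0)"
        using t by (intro sum.cong) (auto simp: ord3_def)
      also have "\<dots> \<le> a" using a by (simp add: sum.delta)
      finally show "h t \<le> f ks + a" using t by (simp add: h_def selB_def)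
    qed
    finally show ?thesis by simp
  qed
  have same: "policy_plan K p ?IA = policy_plan K p ?IB" for p
  proof -
    have "obs_at K ?IA = obs_at K ?IB"
      unfolding obs_at_def IA3_def IB3_def by (simp add: fun_eq_iff)
    moreover have "inv_obs K ?IA = inv_obs K ?IB"
      unfolding inv_obs_def IA3_def IB3_def by (simp add: fun_eq_iff)
    moreover have "n_items ?IA = n_items ?IB" by (simp add: IA3_def IB3_def)
    ultimately show ?thesis
      by (simp add: policy_plan_def history_def)
  qed
  have U: "0 \<le> f ks + real n * a" "0 \<le> f 0 + real n * a + real n * (f ks + a)"
    using f ksK a by auto
  show ?thesis
  proof (rule two_scen[OF P _ _ _ _ _ _ r U])
    show "(\<lambda>\<omega>. plan_cost K f ?IA (policy_plan K (\<pi> \<omega>) ?IA)) \<in> borel_measurable M"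
      using meas vA by blast
    show "(\<lambda>\<omega>. plan_cost K f ?IB (policy_plan K (\<pi> \<omega>) ?IB)) \<in> borel_measurable M"
      using meas vB by blast
    show "\<forall>\<omega>\<in>space M. 0 \<le> plan_cost K f ?IA (policy_plan K (\<pi> \<omega>) ?IA) \<and>
        0 \<le> plan_cost K f ?IB (policy_plan K (\<pi> \<omega>) ?IB) \<and>
        real n * f 0 \<le> real n * plan_cost K f ?IA (policy_plan K (\<pi> \<omega>) ?IA) + plan_cost K f ?IB (policy_plan K (\<pi> \<omega>) ?IB)"
    proof
      fix \<omega> assume w: "\<omega> \<in> space M"
      have fA: "feasible_plan K ?IA (policy_plan K (\<pi> \<omega>) ?IB)"
        using fp w vA same unfolding feasible_policy_def by metis
      have fB: "feasible_plan K ?IB (policy_plan K (\<pi> \<omega>) ?IB)"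
        using fp w vB unfolding feasible_policy_def by blast
      show "0 \<le> plan_cost K f ?IA (policy_plan K (\<pi> \<omega>) ?IA) \<and>
        0 \<le> plan_cost K f ?IB (policy_plan K (\<pi> \<omega>) ?IB) \<and>
        real n * f 0 \<le> real n * plan_cost K f ?IA (policy_plan K (\<pi> \<omega>) ?IA) + plan_cost K f ?IB (policy_plan K (\<pi> \<omega>) ?IB)"
        using plan_cost_parts(3)[OF vA _ f] plan_cost_parts(3)[OF vB _ f] a
          pw3[OF ks f a(1) less_imp_le[OF a(2)] fA fB] same by simp
    qed
    show "(\<integral>\<^sup>+\<omega>. ennreal (plan_cost K f ?IA (policy_plan K (\<pi> \<omega>) ?IA)) \<partial>M) \<le> ennreal (r * (f ks + real n * a))"
    proof -
      have "alg_cost K f M \<pi> ?IA \<le> ennreal (r * plan_cost K f ?IA (\<lambda>t k i. if k = ks then 1 else 0))"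
        by (rule alg_le_opt[OF cr r vA _ f feA]) (use a in simp)
      also have "\<dots> \<le> ennreal (r * (f ks + real n * a))"
        using cA r by (intro ennreal_leI mult_left_mono) auto
      finally show ?thesis unfolding alg_cost_def .
    qed
    show "(\<integral>\<^sup>+\<omega>. ennreal (plan_cost K f ?IB (policy_plan K (\<pi> \<omega>) ?IB)) \<partial>M) \<le> ennreal (r * (f 0 + real n * a + real n * (f ks + a)))"
    proof -
      have "alg_cost K f M \<pi> ?IB \<le> ennreal (r * plan_cost K f ?IB (\<lambda>t k i. if k = selB t then ord3 t i else 0))"
        by (rule alg_le_opt[OF cr r vB _ f feB]) (use a in simp)
      also have "\<dots> \<le> ennreal (r * (f 0 + real n * a + real n * (f ks + a)))"
        using cB r by (intro ennreal_leI mult_left_mono) auto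
      finally show ?thesis unfolding alg_cost_def .
    qed
    show "0 \<le> real n" by simp
  qed
qed

lemma arith2:
  fixes a b F r N :: real
  assumes a: "0 < a" "a < b" and F: "F \<ge> 0" and r: "r \<ge> 0"
    and N: "N > 2*F/(b-a) + b*F/(a*a)"
    and h: "(3*a+b)*N \<le> r*(1*(F + 2*a*N) + (F + 2*a*N))"
  shows "1 \<le> r" "b/(4*a) \<le> r"
proof -
  have q1: "2*F/(b-a) \<ge> 0" using a F by simp
  have q2: "b*F/(a*a) \<ge> 0" using a F by simp
  have N1: "N > 2*F/(b-a)" using N q2 by linarith
  have N2: "N > b*F/(a*a)" using N q1 by linarith
  have Np: "N > 0" using N1 q1 by linarith
  have "a*N > 0" using a Np by simp
  then have X: "2*(F + 2*a*N) > 0" using F by simp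
  have h': "(3*a+b)*N \<le> r*(2*(F + 2*a*N))" using h by (simp add: mult.commute)
  have e1: "2*F < (b-a)*N" using N1 a by (simp add: pos_divide_less_eq mult.commute)
  have e2: "b*F < (a*a)*N" using N2 a by (simp add: pos_divide_less_eq mult.commute)
  show "1 \<le> r"
  proof (rule ccontr)
    assume "\<not> 1 \<le> r"
    then have "r < 1" by simp
    then have "r*(2*(F + 2*a*N)) < 1*(2*(F + 2*a*N))" using X by (intro mult_strict_right_mono) auto
    then show False using h' e1 by (simp add: algebra_simps)
  qed
  show "b/(4*a) \<le> r"
  proof (rule ccontr)
    assume "\<not> b/(4*a) \<le> r"
    then have "r < b/(4*a)" by simp
    then have "r*(2*(F + 2*a*N)) < b/(4*a)*(2*(F + 2*a*N))" using X by (intro mult_strict_right_mono) auto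
    also have "\<dots> = b*F/(2*a) + b*N" using a by (simp add: field_simps)
    finally have "3*a*N < b*F/(2*a)" using h' by (simp add: algebra_simps)
    then have "2*a*(3*a*N) < b*F" using a by (simp add: field_simps)
    moreover have "(a*a)*N \<le> 2*a*(3*a*N)" using a Np by (simp add: algebra_simps)
    ultimately show False using e2 by linarith
  qed
qed

lemma arith3:
  fixes x f0 fm a r :: real
  assumes x: "x \<ge> 1" and a: "a > 0" and f0: "f0 \<ge> 0" and fm: "fm \<ge> 0" and r: "r \<ge> 0"
    and h: "x * f0 \<le> r * (x * (fm + x * a) + (f0 + x * a + x * (fm + a)))"
  shows "min x (f0 / (fm + x * a)) \<le> 4 * r"
proof -
  define D where "D = fm + x * a"
  have Dp: "D > 0" using a x fm by (simp add: D_def add_nonneg_pos)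
  have "x * fm + 2 * x * a \<le> 2 * x * D"
  proof -
    have "2 * x * a \<le> 2 * x * (x * a)" using x a by (simp add: mult_left_mono)
    moreover have "0 \<le> x * fm" using x fm by simp
    ultimately show ?thesis unfolding D_def by (simp add: algebra_simps)
  qed
  then have s: "x * (fm + x * a) + (f0 + x * a + x * (fm + a)) \<le> f0 + 3 * x * D"
    unfolding D_def by (simp add: algebra_simps)
  have h2: "x * f0 \<le> r * (f0 + 3 * x * D)"
    using h mult_left_mono[OF s r] by linarith
  show ?thesis
  proof (cases "f0 \<le> x * D")
    case True
    have "r * (f0 + 3 * x * D) \<le> r * (4 * x * D)" using True r by (intro mult_left_mono) (auto simp: mult.commute)
    then have "x * f0 \<le> x * (4 * r * D)" using h2 by (simp add: algebra_simps)
    then have "f0 \<le> 4 * r * D" using x by simp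
    then have "f0 / D \<le> 4 * r" using Dp by (simp add: pos_divide_le_eq)
    then show ?thesis unfolding D_def by simp
  next
    case False
    then have "r * (f0 + 3 * x * D) \<le> r * (4 * f0)" using r by (intro mult_left_mono) auto
    then have "x * f0 \<le> (4 * r) * f0" using h2 by (simp add: algebra_simps)
    moreover have "f0 > 0" using False Dp x by (smt (verit) mult_pos_pos)
    ultimately have "x \<le> 4 * r" by simp
    then show ?thesis by simp
  qed
qed

theorem theorem2:
  fixes K :: nat and f :: "nat \<Rightarrow> real" and a b :: real
    and M :: "'r measure" and \<pi> :: "'r \<Rightarrow> policy"
  assumes "K \<ge> 2"
    and "\<forall>k\<le>K. f k \<ge> 0"
    and "0 < a" and "a < b"
    and "prob_space M"
    and "\<forall>\<omega>\<in>space M. feasible_policy K a b (\<pi> \<omega>)"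
    and "\<forall>I. valid_inst K a b I \<longrightarrow>
           (\<lambda>\<omega>. plan_cost K f I (policy_plan K (\<pi> \<omega>) I)) \<in> borel_measurable M"
  shows "ennreal (max 1 (max (b / (4 * a))
            ((1/4) * (SUP n\<in>{2::nat..}. min (real n)
                        (f 0 / (Min (f ` {1..K}) + real n * a))))))
         \<le> comp_ratio K f a b M \<pi>"
proof (cases "comp_ratio K f a b M \<pi>" rule: ennreal_cases)
  case top
  then show ?thesis by simp
next
  case (real r)
  note cr = real(2) and r = real(1)
  define F where "F = f 1 + f 2"
  have F0: "F \<ge> 0" using assms(1,2) by (simp add: F_def)
  obtain N :: nat where N: "2*F/(b-a) + b*F/(a*a) < real N" using reals_Archimedean2 by blast
  have h2: "(3*a+b) * real N \<le> r * (1 * (F + 2*a*real N) + (F + 2*a*real N))"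
    using constr2[OF assms(1,2,3,4,5,6,7) cr r, of N] by (simp add: F_def)
  have r1: "1 \<le> r" and r2: "b/(4*a) \<le> r"
    using arith2[OF assms(3,4) F0 r N h2] by auto
  have fin: "finite (f ` {1..K})" and ne: "f ` {1..K} \<noteq> {}" using assms(1) by auto
  obtain ks where ks: "ks \<in> {1..K}" and fks: "f ks = Min (f ` {1..K})"
    using Min_in[OF fin ne] by (metis imageE)
  have each: "min (real n) (f 0 / (Min (f ` {1..K}) + real n * a)) \<le> 4 * r" if n: "n \<in> {2::nat..}" for n
  proof -
    have n1: "n \<ge> 1" using n by simp
    have h: "real n * f 0 \<le> r * (real n * (f ks + real n * a) + (f 0 + real n * a + real n * (f ks + a)))"
      using constr3[OF ks assms(2,3,4,5,6,7) cr r n1] .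
    have "min (real n) (f 0 / (f ks + real n * a)) \<le> 4 * r"
      by (rule arith3[OF _ assms(3) _ _ r h]) (use n1 assms(2) ks in auto)
    then show ?thesis using fks by simp
  qed
  have "(SUP n\<in>{2::nat..}. min (real n) (f 0 / (Min (f ` {1..K}) + real n * a))) \<le> 4 * r"
    by (rule cSUP_least) (use each in auto)
  then have r3: "(1/4) * (SUP n\<in>{2::nat..}. min (real n) (f 0 / (Min (f ` {1..K}) + real n * a))) \<le> r"
    by simp
  show ?thesis unfolding cr
    by (rule ennreal_leI) (use r1 r2 r3 in auto)
qed

end
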